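(* Let $p$ be a random partition that generates the potential for TU games, i.e., $\sum_{\pi\in\Pi(N)}p_N(\pi)\sum_{B\in\pi}v(B)=\mathrm{Pot}(v)$ for all $N\subseteq\mathbf{U}$ and all TU games $v$ on $N$. Then (i) $p_N(\{N\})=\frac1n$ and $p_N(\{N\setminus\{i\},\{i\}\})=\frac{1}{n(n-1)}$ for all $N\subseteq\mathbf{U}$ and $i\in N$ (for the second identity, $n\ge 2$); (ii) for all $N\subseteq\mathbf{U}$ with $n\le 3$, $p_N(\pi)=p^\star_N(\pi)=\frac{\prod_{B\in\pi}(b-1)!}{n!}$ for all $\pi\in\Pi(N)$.
   Context: $\mathbf{U}$ is a finite set of players; cardinalities of $N,S,B$ are $n,s,b$. $\Pi(N)$ is the set of partitions of $N$. A random partition is a family $p=(p_N)_{N\subseteq\mathbf{U}}$ with $p_N$ a probability distribution on $\Pi(N)$. A TU game on $N$ is $v:2^N\to\mathbb{R}$ with $v(\emptyset)=0$. $\mathrm{Pot}$ is the potential for TU games, $\mathrm{Pot}(v)=\sum_{\emptyset\ne S\subseteq N}\frac{(s-1)!(n-s)!}{n!}v(S)$ (the unique map vanishing on the empty game with $\sum_{i\in N}[\mathrm{Pot}(v)-\mathrm{Pot}(v|_{2^{N\setminus\{i\}}})]=v(N)$). *)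

theory Defs
  imports Complex_Main "HOL-Library.Disjoint_Sets"
begin

definition Partitions :: "'a set \<Rightarrow> 'a set set set" where
  "Partitions N = {P. partition_on N P}"

definition random_partition :: "'a set \<Rightarrow> ('a set \<Rightarrow> 'a set set \<Rightarrow> real) \<Rightarrow> bool" where
  "random_partition U p \<longleftrightarrow>
     (\<forall>N. N \<subseteq> U \<longrightarrow> (\<forall>\<pi>\<in>Partitions N. p N \<pi> \<ge> 0) \<and> (\<Sum>\<pi>\<in>Partitions N. p N \<pi>) = 1)"

text \<open>A TU game on N: v with v(\<emptyset>) = 0 (only values on subsets of N matter).\<close>
definition TU_game :: "'a set \<Rightarrow> ('a set \<Rightarrow> real) \<Rightarrow> bool" where
  "TU_game N v \<longleftrightarrow> v {} = 0"

definition Pot :: "'a set \<Rightarrow> ('a set \<Rightarrow> real) \<Rightarrow> real" where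
  "Pot N v = (\<Sum>S | S \<subseteq> N \<and> S \<noteq> {}.
      (fact (card S - 1) * fact (card N - card S) / fact (card N)) * v S)"

definition generates_Pot :: "'a set \<Rightarrow> ('a set \<Rightarrow> 'a set set \<Rightarrow> real) \<Rightarrow> bool" where
  "generates_Pot U p \<longleftrightarrow>
     (\<forall>N v. N \<subseteq> U \<longrightarrow> TU_game N v \<longrightarrow>
        (\<Sum>\<pi>\<in>Partitions N. p N \<pi> * (\<Sum>B\<in>\<pi>. v B)) = Pot N v)"

definition p_star :: "'a set \<Rightarrow> 'a set set \<Rightarrow> real" where
  "p_star N \<pi> = (\<Prod>B\<in>\<pi>. fact (card B - 1)) / fact (card N)"

end

theory Submission
  imports Defs
begin

lemma part_finite: "finite N \<Longrightarrow> \<pi> \<in> Partitions N \<Longrightarrow> finite \<pi>"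
proof -
  assume a: "finite N" "\<pi> \<in> Partitions N"
  have "\<pi> \<subseteq> Pow N" using a(2) unfolding Partitions_def partition_on_def by auto
  then show ?thesis using a(1) by (meson finite_Pow_iff rev_finite_subset)
qed

lemma Partitions_finite: "finite N \<Longrightarrow> finite (Partitions N)"
proof -
  assume "finite N"
  have "Partitions N \<subseteq> Pow (Pow N)"
    unfolding Partitions_def partition_on_def by auto
  then show ?thesis using \<open>finite N\<close> by (meson finite_Pow_iff rev_finite_subset)
qed

lemma block_sub: "\<pi> \<in> Partitions N \<Longrightarrow> B \<in> \<pi> \<Longrightarrow> B \<subseteq> N \<and> B \<noteq> {}"
  unfolding Partitions_def partition_on_def by auto

lemma block_disj: "\<pi> \<in> Partitions N \<Longrightarrow> B \<in> \<pi> \<Longrightarrow> C \<in> \<pi> \<Longrightarrow> B \<noteq> C \<Longrightarrow> B \<inter> C = {}"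
  unfolding Partitions_def partition_on_def by (auto dest: disjointD)

lemma block_cover: "\<pi> \<in> Partitions N \<Longrightarrow> x \<in> N \<Longrightarrow> \<exists>B\<in>\<pi>. x \<in> B"
  unfolding Partitions_def partition_on_def by auto

lemma block_prob:
  assumes gp: "generates_Pot U p" and NU: "N \<subseteq> U" and fU: "finite U"
    and SN: "S \<subseteq> N" and Sne: "S \<noteq> {}"
  shows "(\<Sum>\<pi>\<in>Partitions N. p N \<pi> * (if S \<in> \<pi> then 1 else 0))
         = fact (card S - 1) * fact (card N - card S) / fact (card N)"
proof -
  define v where "v = (\<lambda>T. if T = S then 1 else (0::real))"
  have tu: "TU_game N v" using Sne unfolding TU_game_def v_def by auto
  have fN: "finite N" using NU fU finite_subset by blast
  have 1: "(\<Sum>\<pi>\<in>Partitions N. p N \<pi> * (\<Sum>B\<in>\<pi>. v B)) = Pot N v"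
    using gp NU tu unfolding generates_Pot_def by blast
  have 2: "(\<Sum>B\<in>\<pi>. v B) = (if S \<in> \<pi> then 1 else 0)" if "\<pi> \<in> Partitions N" for \<pi>
    using part_finite[OF fN that] unfolding v_def by (simp add: sum.delta')
  have fS: "finite {T. T \<subseteq> N \<and> T \<noteq> {}}" using fN by simp
  have 3: "Pot N v = fact (card S - 1) * fact (card N - card S) / fact (card N)"
    unfolding Pot_def v_def using fS SN Sne
    by (simp add: sum.delta' if_distrib cong: if_cong)
  have "(\<Sum>\<pi>\<in>Partitions N. p N \<pi> * (\<Sum>B\<in>\<pi>. v B)) = (\<Sum>\<pi>\<in>Partitions N. p N \<pi> * (if S \<in> \<pi> then 1 else 0))"
    by (rule sum.cong) (simp_all add: 2)
  then show ?thesis using 1 3 by simp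
qed


lemma full_block: "\<pi> \<in> Partitions N \<Longrightarrow> N \<in> \<pi> \<Longrightarrow> \<pi> = {N}"
proof -
  assume a: "\<pi> \<in> Partitions N" "N \<in> \<pi>"
  have "B = N" if "B \<in> \<pi>" for B
  proof (rule ccontr)
    assume "B \<noteq> N"
    then have "B \<inter> N = {}" using block_disj[OF a(1) that a(2)] by simp
    moreover have "B \<subseteq> N \<and> B \<noteq> {}" using block_sub[OF a(1) that] .
    ultimately show False by blast
  qed
  then show ?thesis using a(2) by blast
qed

lemma cut_block:
  assumes a: "\<pi> \<in> Partitions N" "i \<in> N" "N - {i} \<in> \<pi>"
  shows "\<pi> = {N - {i}, {i}}"
proof -
  have bi: "B = {i}" if "B \<in> \<pi>" "B \<noteq> N - {i}" for B
  proof -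
    have "B \<inter> (N - {i}) = {}" using block_disj[OF a(1) that(1) a(3) that(2)] .
    moreover have "B \<subseteq> N \<and> B \<noteq> {}" using block_sub[OF a(1) that(1)] .
    ultimately show ?thesis by blast
  qed
  obtain B where B: "B \<in> \<pi>" "i \<in> B" using block_cover[OF a(1) a(2)] by blast
  then have "B \<noteq> N - {i}" by blast
  then have "{i} \<in> \<pi>" using bi B by blast
  then show ?thesis using bi a(3) by blast
qed

lemma part_full: "N \<noteq> {} \<Longrightarrow> {N} \<in> Partitions N"
  unfolding Partitions_def by (simp add: partition_on_space)

lemma part_cut: "i \<in> N \<Longrightarrow> N - {i} \<noteq> {} \<Longrightarrow> {N - {i}, {i}} \<in> Partitions N"
  unfolding Partitions_def partition_on_def
  by (auto simp: disjoint_def pairwise_def disjnt_def)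

lemma part_sing: "(\<lambda>x. {x}) ` N \<in> Partitions N"
  unfolding Partitions_def by (simp add: partition_on_singletons)

lemma fact_ratio1: "n \<ge> 1 \<Longrightarrow> fact (n - 1) * fact 0 / fact n = 1 / (real n)"
proof -
  assume "n \<ge> 1"
  then obtain m where "n = Suc m" by (cases n) auto
  moreover have "(fact m :: real) \<noteq> 0" by simp
  moreover have "fact (Suc m) = (real m + 1) * (fact m :: real)" by (simp add: algebra_simps)
  ultimately show ?thesis by simp
qed

lemma fact_ratio2: "n \<ge> 2 \<Longrightarrow> fact (n - 2) * fact 1 / fact n = 1 / (real n * (real n - 1))"
proof -
  assume "n \<ge> 2"
  then obtain m where m: "n = m + 2" by (metis add.commute le_add_diff_inverse)
  have "fact (m+2) = (real m + 2) * (real m + 1) * (fact m :: real)"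
    by (simp add: fact_Suc algebra_simps numeral_2_eq_2)
  moreover have "(fact m :: real) \<noteq> 0" by simp
  ultimately show ?thesis using m by (simp add: of_nat_diff)
qed

lemma P1:
  assumes gp: "generates_Pot U p" and NU: "N \<subseteq> U" and fU: "finite U" and ne: "N \<noteq> {}"
  shows "p N {N} = 1 / real (card N)"
proof -
  have fN: "finite N" using NU fU finite_subset by blast
  have "(\<Sum>\<pi>\<in>Partitions N. p N \<pi> * (if N \<in> \<pi> then 1 else 0))
         = fact (card N - 1) * fact (card N - card N) / fact (card N)"
    using block_prob[OF gp NU fU _ ne] by simp
  also have "(\<Sum>\<pi>\<in>Partitions N. p N \<pi> * (if N \<in> \<pi> then 1 else 0))
      = (\<Sum>\<pi>\<in>Partitions N. if \<pi> = {N} then p N \<pi> else 0)"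
    by (rule sum.cong) (auto dest: full_block)
  also have "\<dots> = p N {N}" using Partitions_finite[OF fN] part_full[OF ne]
    by (simp add: sum.delta')
  finally show ?thesis using fact_ratio1[of "card N"] fN ne
    by (simp add: Suc_leI card_gt_0_iff)
qed

lemma P2:
  assumes gp: "generates_Pot U p" and NU: "N \<subseteq> U" and fU: "finite U"
    and iN: "i \<in> N" and c2: "card N \<ge> 2"
  shows "p N {N - {i}, {i}} = 1 / (real (card N) * (real (card N) - 1))"
proof -
  have fN: "finite N" using NU fU finite_subset by blast
  have cc: "card (N - {i}) = card N - 1" using fN iN by simp
  then have "card (N - {i}) > 0" using c2 by simp
  then have ne: "N - {i} \<noteq> {}" by (metis card_gt_0_iff)
  have "(\<Sum>\<pi>\<in>Partitions N. p N \<pi> * (if N - {i} \<in> \<pi> then 1 else 0))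
         = fact (card (N - {i}) - 1) * fact (card N - card (N - {i})) / fact (card N)"
    using block_prob[OF gp NU fU _ ne] by blast
  also have "\<dots> = fact (card N - 2) * fact 1 / fact (card N)"
    using cc c2 by (simp add: numeral_2_eq_2 Suc_diff_Suc)
  also have "\<dots> = 1 / (real (card N) * (real (card N) - 1))" using fact_ratio2[OF c2] .
  also have "(\<Sum>\<pi>\<in>Partitions N. p N \<pi> * (if N - {i} \<in> \<pi> then 1 else 0))
      = (\<Sum>\<pi>\<in>Partitions N. if \<pi> = {N - {i}, {i}} then p N \<pi> else 0)"
    by (rule sum.cong) (auto dest: cut_block[OF _ iN])
  also have "\<dots> = p N {N - {i}, {i}}" using Partitions_finite[OF fN] part_cut[OF iN ne]
    by (simp add: sum.delta')
  finally show ?thesis .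
qed


lemma card_minus_one:
  assumes "finite N" "B \<subseteq> N" "card B = card N - 1" "card N \<ge> 1"
  shows "\<exists>i\<in>N. B = N - {i}"
proof -
  have "card (N - B) = 1" using assms by (simp add: card_Diff_subset finite_subset)
  then obtain i where i: "N - B = {i}" by (metis card_1_singletonE)
  then have "B = N - {i}" using assms(2) by blast
  then show ?thesis using i by blast
qed

lemma classify:
  assumes a: "\<pi> \<in> Partitions N" and fN: "finite N" and c3: "card N \<le> 3" and ne: "N \<noteq> {}"
  shows "\<pi> = {N} \<or> (\<exists>i\<in>N. card N \<ge> 2 \<and> \<pi> = {N - {i}, {i}}) \<or> (card N = 3 \<and> \<pi> = (\<lambda>x. {x}) ` N)"
proof (cases "N \<in> \<pi>")
  case True
  then show ?thesis using full_block[OF a] by blast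
next
  case F1: False
  show ?thesis
  proof (cases "\<exists>i\<in>N. N - {i} \<in> \<pi>")
    case True
    then obtain i where i: "i \<in> N" "N - {i} \<in> \<pi>" by blast
    then have "N - {i} \<noteq> {}" using block_sub[OF a] by blast
    then have "card (N - {i}) > 0" using fN by (simp add: card_gt_0_iff)
    then have "card N \<ge> 2" using i fN by simp
    then show ?thesis using cut_block[OF a i] i by blast
  next
    case F2: False
    have cN: "card N \<ge> 1" using ne fN by (simp add: Suc_leI card_gt_0_iff)
    have c1: "card B = 1 \<and> card N = 3" if B: "B \<in> \<pi>" for B
    proof -
      have sub: "B \<subseteq> N" "B \<noteq> {}" using block_sub[OF a B] by auto
      have "B \<noteq> N" using F1 B by blast
      then have lt: "card B < card N" using sub fN by (meson psubsetI psubset_card_mono)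
      have "card B \<noteq> card N - 1" using card_minus_one[OF fN sub(1) _ cN] F2 B by blast
      moreover have "card B \<ge> 1" using sub fN by (metis Suc_leI card_gt_0_iff finite_subset One_nat_def)
      ultimately show ?thesis using lt c3 by linarith
    qed
    have "\<pi> = (\<lambda>x. {x}) ` N"
    proof
      show "\<pi> \<subseteq> (\<lambda>x. {x}) ` N"
      proof
        fix B assume B: "B \<in> \<pi>"
        then obtain x where "B = {x}" using c1 by (metis card_1_singletonE)
        then show "B \<in> (\<lambda>x. {x}) ` N" using block_sub[OF a B] by blast
      qed
    next
      show "(\<lambda>x. {x}) ` N \<subseteq> \<pi>"
      proof
        fix C assume "C \<in> (\<lambda>x. {x}) ` N"
        then obtain x where x: "x \<in> N" "C = {x}" by blast
        obtain B where B: "B \<in> \<pi>" "x \<in> B" using block_cover[OF a x(1)] by blast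
        then obtain y where "B = {y}" using c1 by (metis card_1_singletonE)
        then show "C \<in> \<pi>" using B x by blast
      qed
    qed
    moreover obtain x where "x \<in> N" using ne by blast
    then obtain B where "B \<in> \<pi>" using block_cover[OF a] by blast
    then have "card N = 3" using c1 by blast
    ultimately show ?thesis by blast
  qed
qed

lemma P0:
  fixes p :: "'a set \<Rightarrow> 'a set set \<Rightarrow> real"
  assumes "random_partition U p"
  shows "p {} {} = 1"
proof -
  have "Partitions ({} :: 'a set) = {{}}" unfolding Partitions_def by (auto simp: partition_on_empty)
  moreover have "sum (p {}) (Partitions {}) = 1"
    using assms unfolding random_partition_def by blast
  ultimately show ?thesis by simp
qed


lemma P3:
  assumes gp: "generates_Pot U p" and NU: "N \<subseteq> U" and fU: "finite U" and c3: "card N = 3"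
  shows "p N ((\<lambda>x. {x}) ` N) = 1 / 6"
proof -
  have fN: "finite N" using NU fU finite_subset by blast
  have ne: "N \<noteq> {}" using c3 by auto
  then obtain a where aN: "a \<in> N" by blast
  define A where "A = {N - {a}, {a}}"
  define Sg where "Sg = (\<lambda>x. {x}) ` N"
  have cNa: "card (N - {a}) = 2" using c3 aN fN by simp
  then have nea: "N - {a} \<noteq> {}" by (metis card.empty zero_neq_numeral)
  have AP: "A \<in> Partitions N" unfolding A_def using part_cut[OF aN nea] .
  have SP: "Sg \<in> Partitions N" unfolding Sg_def using part_sing .
  have aA: "{a} \<in> A" unfolding A_def by blast
  have aS: "{a} \<in> Sg" unfolding Sg_def using aN by blast
  have AS: "A \<noteq> Sg"
  proof
    assume "A = Sg"
    then have "N - {a} \<in> Sg" unfolding A_def by blast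
    then obtain x where "N - {a} = {x}" unfolding Sg_def by blast
    then show False using cNa by simp
  qed
  have inv: "\<pi> = A \<or> \<pi> = Sg" if that0: "\<pi> \<in> Partitions N" "{a} \<in> \<pi>" for \<pi>
  proof -
    from classify[OF that(1) fN _ ne] c3
    have "\<pi> = {N} \<or> (\<exists>i\<in>N. card N \<ge> 2 \<and> \<pi> = {N - {i}, {i}}) \<or> (card N = 3 \<and> \<pi> = Sg)"
      unfolding Sg_def by simp
    moreover have "\<pi> \<noteq> {N}" using that(2) c3 by auto
    moreover have "\<pi> = A" if i: "i \<in> N" "\<pi> = {N - {i}, {i}}" for i
    proof -
      have c2: "card (N - {i}) = 2" using c3 i fN by simp
      have "{a} \<noteq> N - {i}"
      proof
        assume "{a} = N - {i}"
        then have "card {a} = (2::nat)" using c2 by simp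
        then show False by simp
      qed
      then have "{a} = {i}" using that0(2) i(2) by blast
      then show ?thesis using i unfolding A_def by simp
    qed
    ultimately show ?thesis by blast
  qed
  have "(\<Sum>\<pi>\<in>Partitions N. p N \<pi> * (if {a} \<in> \<pi> then 1 else 0))
         = fact (card {a} - 1) * fact (card N - card {a}) / fact (card N)"
    using block_prob[OF gp NU fU] aN by simp
  also have "\<dots> = 1 / 3" using c3 by (simp add: numeral_3_eq_3 numeral_2_eq_2)
  also have "(\<Sum>\<pi>\<in>Partitions N. p N \<pi> * (if {a} \<in> \<pi> then 1 else 0))
      = (\<Sum>\<pi>\<in>Partitions N. (if \<pi> = A then p N \<pi> else 0) + (if \<pi> = Sg then p N \<pi> else 0))"
  proof (rule sum.cong)
    fix \<pi> assume "\<pi> \<in> Partitions N"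
    then show "p N \<pi> * (if {a} \<in> \<pi> then 1 else 0) = (if \<pi> = A then p N \<pi> else 0) + (if \<pi> = Sg then p N \<pi> else 0)"
      using inv aA aS AS by auto
  qed simp
  also have "\<dots> = p N A + p N Sg"
    using Partitions_finite[OF fN] AP SP by (simp add: sum.distrib sum.delta')
  finally have "p N A + p N Sg = 1/3" .
  moreover have "p N A = 1 / 6" unfolding A_def using P2[OF gp NU fU aN] c3 by simp
  ultimately show ?thesis unfolding Sg_def by simp
qed

theorem corollary1:
  fixes U :: "'a set" and p :: "'a set \<Rightarrow> 'a set set \<Rightarrow> real"
  assumes "finite U"
    and "random_partition U p"
    and "generates_Pot U p"
  shows "(\<forall>N. N \<subseteq> U \<longrightarrow> N \<noteq> {} \<longrightarrow> p N {N} = 1 / real (card N))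
       \<and> (\<forall>N i. N \<subseteq> U \<longrightarrow> i \<in> N \<longrightarrow> card N \<ge> 2 \<longrightarrow>
            p N {N - {i}, {i}} = 1 / (real (card N) * (real (card N) - 1)))
       \<and> (\<forall>N. N \<subseteq> U \<longrightarrow> card N \<le> 3 \<longrightarrow>
            (\<forall>\<pi>\<in>Partitions N. p N \<pi> = p_star N \<pi> \<and>
               p_star N \<pi> = (\<Prod>B\<in>\<pi>. fact (card B - 1)) / fact (card N)))"
proof (intro conjI allI impI ballI)
  fix N assume "N \<subseteq> U" "N \<noteq> {}"
  then show "p N {N} = 1 / real (card N)" using P1[OF assms(3) _ assms(1)] by blast
next
  fix N i assume "N \<subseteq> U" "i \<in> N" "card N \<ge> 2"
  then show "p N {N - {i}, {i}} = 1 / (real (card N) * (real (card N) - 1))"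
    using P2[OF assms(3) _ assms(1)] by blast
next
  fix N \<pi> assume "N \<subseteq> U" "card N \<le> 3" "\<pi> \<in> Partitions N"
  then show "p_star N \<pi> = (\<Prod>B\<in>\<pi>. fact (card B - 1)) / fact (card N)"
    by (simp add: p_star_def)
next
  fix N \<pi> assume NU: "N \<subseteq> U" and c3: "card N \<le> 3" and a: "\<pi> \<in> Partitions N"
  have fN: "finite N" using NU assms(1) finite_subset by blast
  show "p N \<pi> = p_star N \<pi>"
  proof (cases "N = {}")
    case True
    then have "\<pi> = {}" using a unfolding Partitions_def by (simp add: partition_on_empty)
    then show ?thesis using True P0[OF assms(2)] by (simp add: p_star_def)
  next
    case ne: False
    have cN: "card N \<ge> 1" using ne fN by (simp add: Suc_leI card_gt_0_iff)
    from classify[OF a fN c3 ne]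
    consider "\<pi> = {N}" | i where "i \<in> N" "card N \<ge> 2" "\<pi> = {N - {i}, {i}}"
      | "card N = 3" "\<pi> = (\<lambda>x. {x}) ` N" by blast
    then show ?thesis
    proof cases
      case 1
      then show ?thesis using P1[OF assms(3) NU assms(1) ne] fact_ratio1[OF cN]
        by (simp add: p_star_def)
    next
      case (2 i)
      have neq: "N - {i} \<noteq> {i}" by blast
      have "card (N - {i}) - 1 = card N - 2" using 2 fN by simp
      then have "p_star N \<pi> = fact (card N - 2) * fact 1 / fact (card N)"
        using 2 neq by (simp add: p_star_def)
      then show ?thesis using fact_ratio2[OF 2(2)] P2[OF assms(3) NU assms(1) 2(1,2)] 2(3)
        by simp
    next
      case 3
      have "p_star N \<pi> = 1 / 6" unfolding p_star_def 3(2)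
        by (simp add: prod.reindex 3(1) numeral_3_eq_3)
      then show ?thesis using P3[OF assms(3) NU assms(1) 3(1)] 3(2) by simp
    qed
  qed
qed

end
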